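(* Let $v$ be a weight on $[0,1)$. For each $t\in[0,1)$ the operator $C_t\colon H^\infty_v\to H^\infty_v$ is continuous. Moreover, $\|C_0\|_{H^\infty_v\to H^\infty_v}=1$ and $$1\le \|C_t\|_{H^\infty_v\to H^\infty_v}\le -\frac{\log(1-t)}{t},\qquad t\in(0,1).$$
   Context: $\mathbb{D}=\{z\in\mathbb{C}:|z|<1\}$ and $H(\mathbb{D})$ is the space of holomorphic functions on $\mathbb{D}$. A weight is a continuous non-increasing function $v\colon[0,1)\to(0,\infty)$, extended to $\mathbb{D}$ by $v(z):=v(|z|)$. $H^\infty_v=\{f\in H(\mathbb{D}):\|f\|_{\infty,v}:=\sup_{z\in\mathbb{D}}|f(z)|v(z)<\infty\}$ with norm $\|\cdot\|_{\infty,v}$. For $t\in[0,1]$ the generalized Cesàro operator $C_t$ is defined on $f\in H(\mathbb{D})$ by $C_tf(0)=f(0)$ and $C_tf(z)=\frac{1}{z}\int_0^z\frac{f(\xi)}{1-t\xi}\,d\xi$ for $z\in\mathbb{D}\setminus\{0\}$. *)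

theory Defs
  imports "HOL-Complex_Analysis.Complex_Analysis"
begin

definition is_weight :: "(real \<Rightarrow> real) \<Rightarrow> bool" where
  "is_weight v \<longleftrightarrow> continuous_on {0..<1} v \<and> (\<forall>r\<in>{0..<1}. v r > 0)
     \<and> (\<forall>r s. 0 \<le> r \<longrightarrow> r \<le> s \<longrightarrow> s < 1 \<longrightarrow> v s \<le> v r)"

definition vnorm :: "(real \<Rightarrow> real) \<Rightarrow> (complex \<Rightarrow> complex) \<Rightarrow> real" where
  "vnorm v f = (SUP z\<in>ball 0 1. norm (f z) * v (norm z))"

definition Hv :: "(real \<Rightarrow> real) \<Rightarrow> (complex \<Rightarrow> complex) set" where
  "Hv v = {f. f holomorphic_on ball 0 1 \<and>
              bdd_above ((\<lambda>z. norm (f z) * v (norm z)) ` ball 0 1)}"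

definition cesaro :: "real \<Rightarrow> (complex \<Rightarrow> complex) \<Rightarrow> complex \<Rightarrow> complex" where
  "cesaro t f z = (if z = 0 then f 0
     else (1 / z) * contour_integral (linepath 0 z) (\<lambda>\<xi>. f \<xi> / (1 - complex_of_real t * \<xi>)))"

definition opnorm_v :: "(real \<Rightarrow> real) \<Rightarrow> ((complex \<Rightarrow> complex) \<Rightarrow> (complex \<Rightarrow> complex)) \<Rightarrow> real" where
  "opnorm_v v T = Sup {vnorm v (T f) | f. f \<in> Hv v \<and> vnorm v f \<le> 1}"

end

theory Submission
  imports Defs
begin

definition Lc :: "real \<Rightarrow> real" where
  "Lc t = (if t = 0 then 1 else - ln (1 - t) / t)"

lemma Lc_integral:
  assumes "0 \<le> t" "t < 1"
  shows "((\<lambda>s. 1 / (1 - t * s)) has_integral Lc t) {0..1::real}"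
proof (cases "t = 0")
  case True
  then show ?thesis using has_integral_const_real[of "1::real" 0 1] by (simp add: Lc_def)
next
  case False
  have d: "((\<lambda>s. - ln (1 - t * s) / t) has_vector_derivative 1 / (1 - t * s)) (at s within {0..1})"
    if "s \<in> {0..1}" for s
  proof -
    have "t * s \<le> t" using that assms by (simp add: mult_left_le)
    then have pos: "1 - t * s > 0" using assms by linarith
    have "((\<lambda>s. - ln (1 - t * s) / t) has_real_derivative 1 / (1 - t * s)) (at s)"
      by (rule derivative_eq_intros refl | use pos False in \<open>simp add: field_simps\<close>)+
    then show ?thesis
      using has_real_derivative_iff_has_vector_derivative has_vector_derivative_at_within by blast
  qed
  have "((\<lambda>s. 1 / (1 - t * s)) has_integral (- ln (1 - t * 1) / t - - ln (1 - t * 0) / t)) {0..1::real}"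
    by (rule fundamental_theorem_of_calculus) (use d in auto)
  then show ?thesis using False by (simp add: Lc_def)
qed

lemma Lc_pos: assumes "0 \<le> t" "t < 1" shows "Lc t > 0"
proof (cases "t = 0")
  case False
  have "ln (1 - t) < 0" using assms False by simp
  then show ?thesis using False assms by (simp add: Lc_def divide_neg_pos)
qed (simp add: Lc_def)

lemma vnorm_upper:
  assumes "f \<in> Hv v" "z \<in> ball 0 1"
  shows "norm (f z) * v (norm z) \<le> vnorm v f"
  using assms unfolding Hv_def vnorm_def by (auto intro: cSUP_upper)

lemma vnorm_least:
  assumes "\<And>z. z \<in> ball 0 1 \<Longrightarrow> norm (h z) * v (norm z) \<le> B"
  shows "vnorm v h \<le> B"
  unfolding vnorm_def by (rule cSUP_least) (use assms in auto)

lemma vnorm_nonneg: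
  assumes "f \<in> Hv v" "is_weight v"
  shows "0 \<le> vnorm v f"
proof -
  have "v 0 > 0" using assms(2) by (simp add: is_weight_def)
  then have "0 \<le> norm (f 0) * v (norm (0::complex))" by simp
  also have "\<dots> \<le> vnorm v f" by (rule vnorm_upper[OF assms(1)]) simp
  finally show ?thesis .
qed

lemma denom_nz:
  assumes "0 \<le> t" "t < 1" "z \<in> ball 0 1"
  shows "1 - complex_of_real t * z \<noteq> 0"
proof
  assume "1 - complex_of_real t * z = 0"
  then have "norm (complex_of_real t * z) = 1" by (metis norm_one right_minus_eq)
  moreover have "norm (complex_of_real t * z) < 1"
  proof -
    have "norm (complex_of_real t * z) = t * norm z" using assms(1) by (simp add: norm_mult)
    also have "\<dots> \<le> norm z" using assms(1,2) by (simp add: mult_left_le_one_le)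
    also have "\<dots> < 1" using assms(3) by simp
    finally show ?thesis .
  qed
  ultimately show False by simp
qed

lemma g_holo:
  assumes "f holomorphic_on ball 0 1" "0 \<le> t" "t < 1"
  shows "(\<lambda>\<xi>. f \<xi> / (1 - complex_of_real t * \<xi>)) holomorphic_on ball 0 1"
  using assms denom_nz by (auto intro!: holomorphic_intros)

lemma cesaro_holo:
  assumes "f holomorphic_on ball 0 1" "0 \<le> t" "t < 1"
  shows "cesaro t f holomorphic_on ball 0 1"
proof -
  define g where "g = (\<lambda>\<xi>. f \<xi> / (1 - complex_of_real t * \<xi>))"
  have gh: "g holomorphic_on ball 0 1" unfolding g_def by (rule g_holo[OF assms])
  obtain G where G: "\<And>x. x \<in> ball 0 1 \<Longrightarrow> (G has_field_derivative g x) (at x within ball 0 1)"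
    using holomorphic_convex_primitive'[OF convex_ball open_ball gh] by metis
  have Gat: "(G has_field_derivative g x) (at x)" if "x \<in> ball 0 1" for x
    using G[OF that] at_within_open[OF that open_ball] by simp
  define H where "H = (\<lambda>z. G z - G 0)"
  have Hd: "(H has_field_derivative g x) (at x)" if "x \<in> ball 0 1" for x
    using DERIV_diff[OF Gat[OF that] DERIV_const[of "G 0"]] unfolding H_def by simp
  have Hh: "H holomorphic_on ball 0 1"
    unfolding holomorphic_on_def
  proof
    fix x :: complex assume x: "x \<in> ball 0 1"
    have "H field_differentiable at x" unfolding field_differentiable_def using Hd[OF x] by (rule exI)
    then show "H field_differentiable at x within ball 0 1" by (rule field_differentiable_at_within)
  qed
  have ci: "contour_integral (linepath 0 z) g = H z" if "z \<in> ball 0 1" for z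
  proof -
    have "closed_segment 0 z \<subseteq> ball 0 1"
      by (rule closed_segment_subset) (use that in auto)
    then have "(g has_contour_integral (G z - G 0)) (linepath 0 z)"
      using contour_integral_primitive[OF G valid_path_linepath[of 0 z]] by simp
    then show ?thesis unfolding H_def by (rule contour_integral_unique)
  qed
  have P: "(\<lambda>z. if z = 0 then deriv H 0 else (H z - H 0) / (z - 0)) holomorphic_on ball 0 1"
    by (rule pole_lemma[OF Hh]) (simp add: interior_open)
  have dH: "deriv H 0 = f 0"
  proof -
    have "deriv H 0 = g 0" by (rule DERIV_imp_deriv[OF Hd]) simp
    then show ?thesis by (simp add: g_def)
  qed
  have H0: "H 0 = 0" by (simp add: H_def)
  show ?thesis
  proof (rule holomorphic_transform[OF P])
    fix z :: complex assume z: "z \<in> ball 0 1"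
    show "(if z = 0 then deriv H 0 else (H z - H 0) / (z - 0)) = cesaro t f z"
    proof (cases "z = 0")
      case True
      then show ?thesis using dH by (simp add: cesaro_def)
    next
      case False
      then show ?thesis using ci[OF z, unfolded g_def] H0 by (simp add: cesaro_def)
    qed
  qed
qed

lemma cesaro_integral:
  assumes "f holomorphic_on ball 0 1" "0 \<le> t" "t < 1" "z \<in> ball 0 1"
  shows "cesaro t f z = integral {0..1} (\<lambda>s. f (s *\<^sub>R z) / (1 - complex_of_real t * (s *\<^sub>R z)))"
proof (cases "z = 0")
  case True
  then show ?thesis by (simp add: cesaro_def)
next
  case False
  define g where "g = (\<lambda>\<xi>. f \<xi> / (1 - complex_of_real t * \<xi>))"
  have gh: "g holomorphic_on ball 0 1" unfolding g_def by (rule g_holo[OF assms(1-3)])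
  have seg: "closed_segment 0 z \<subseteq> ball 0 1"
    using assms(4) convex_ball[of "0::complex" 1] by (simp add: closed_segment_subset)
  have "g contour_integrable_on linepath 0 z"
    by (rule contour_integrable_holomorphic_simple[OF gh open_ball]) (use seg in auto)
  then have "(g has_contour_integral contour_integral (linepath 0 z) g) (linepath 0 z)"
    by (rule has_contour_integral_integral)
  then have "((\<lambda>x. g (linepath 0 z x) * z) has_integral contour_integral (linepath 0 z) g) {0..1}"
    by (simp add: has_contour_integral_linepath)
  then have "((\<lambda>x. g (linepath 0 z x) * z / z) has_integral contour_integral (linepath 0 z) g / z) {0..1}"
    by (rule has_integral_divide)
  then have "((\<lambda>x. g (x *\<^sub>R z)) has_integral contour_integral (linepath 0 z) g / z) {0..1}"
    using False by (simp add: linepath_def)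
  then have I: "integral {0..1} (\<lambda>x. g (x *\<^sub>R z)) = contour_integral (linepath 0 z) g / z"
    by (rule integral_unique)
  have "cesaro t f z = contour_integral (linepath 0 z) g / z"
    using False unfolding cesaro_def g_def by simp
  then show ?thesis using I unfolding g_def by simp
qed

lemma weight_mono:
  assumes "is_weight v" "0 \<le> r" "r \<le> s" "s < 1"
  shows "v s \<le> v r"
  using assms unfolding is_weight_def by blast

lemma weight_pos:
  assumes "is_weight v" "0 \<le> r" "r < 1"
  shows "v r > 0"
  using assms unfolding is_weight_def by simp

lemma cesaro_bound:
  assumes w: "is_weight v" and f: "f \<in> Hv v" and t: "0 \<le> t" "t < 1" and z: "z \<in> ball 0 1"
  shows "norm (cesaro t f z) * v (norm z) \<le> vnorm v f * Lc t"
proof -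
  have fh: "f holomorphic_on ball 0 1" using f by (simp add: Hv_def)
  define M where "M = vnorm v f"
  have M0: "0 \<le> M" unfolding M_def by (rule vnorm_nonneg[OF f w])
  have nz: "norm z < 1" using z by simp
  have vz: "v (norm z) > 0" by (rule weight_pos[OF w]) (use nz in auto)
  define h where "h = (\<lambda>s::real. f (s *\<^sub>R z) / (1 - complex_of_real t * (s *\<^sub>R z)))"
  have inball: "s *\<^sub>R z \<in> ball 0 1" if "s \<in> {0..1}" for s
  proof -
    have "norm (s *\<^sub>R z) = s * norm z" using that by simp
    also have "\<dots> \<le> norm z" using that by (simp add: mult_left_le_one_le)
    finally show ?thesis using nz by simp
  qed
  have c1: "continuous_on {0..1} (\<lambda>s::real. s *\<^sub>R z)" by (intro continuous_intros)
  have c2: "continuous_on {0..1} (\<lambda>s::real. f (s *\<^sub>R z))"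
    by (rule continuous_on_compose2[OF holomorphic_on_imp_continuous_on[OF fh] c1]) (use inball in auto)
  have dnz: "\<And>s. s \<in> {0..1} \<Longrightarrow> 1 - complex_of_real t * (s *\<^sub>R z) \<noteq> 0"
    using denom_nz[OF t inball] by blast
  have hc: "continuous_on {0..1} h"
    unfolding h_def
    by (intro continuous_intros c2) (use dnz in blast)
  have hi: "h integrable_on {0..1}" by (rule integrable_continuous_interval[OF hc])
  have bnd: "norm (h s) \<le> M / v (norm z) * (1 / (1 - t * s))" if s: "s \<in> {0..1}" for s
  proof -
    have ns: "norm (s *\<^sub>R z) = s * norm z" using s by simp
    have "norm (f (s *\<^sub>R z)) * v (norm (s *\<^sub>R z)) \<le> M"
      unfolding M_def by (rule vnorm_upper[OF f inball[OF s]])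
    moreover have "v (norm z) \<le> v (norm (s *\<^sub>R z))"
      by (rule weight_mono[OF w]) (use s nz ns in \<open>auto simp: mult_left_le_one_le\<close>)
    ultimately have "norm (f (s *\<^sub>R z)) * v (norm z) \<le> M"
      by (smt (verit) mult_left_mono norm_ge_zero)
    then have A: "norm (f (s *\<^sub>R z)) \<le> M / v (norm z)"
      using vz by (simp add: pos_le_divide_eq)
    have ts: "t * s \<le> t" using s t by (simp add: mult_left_le)
    have "t * s * norm z \<le> t * s" using s t nz by (simp add: mult_left_le)
    then have "norm (complex_of_real t * (s *\<^sub>R z)) \<le> t * s"
      using s t by (simp add: norm_mult mult_ac)
    then have B: "1 - t * s \<le> norm (1 - complex_of_real t * (s *\<^sub>R z))"
      using norm_triangle_ineq2[of 1 "complex_of_real t * (s *\<^sub>R z)"] by simp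
    have pos: "0 < 1 - t * s" using ts t by linarith
    have "norm (h s) = norm (f (s *\<^sub>R z)) / norm (1 - complex_of_real t * (s *\<^sub>R z))"
      unfolding h_def by (simp add: norm_divide)
    also have "\<dots> \<le> norm (f (s *\<^sub>R z)) / (1 - t * s)"
      by (rule divide_left_mono[OF B norm_ge_zero]) (meson B pos less_le_trans mult_pos_pos)
    also have "\<dots> \<le> (M / v (norm z)) / (1 - t * s)"
      by (rule divide_right_mono[OF A]) (use pos in simp)
    finally show ?thesis by simp
  qed
  have gi: "((\<lambda>s. M / v (norm z) * (1 / (1 - t * s))) has_integral M / v (norm z) * Lc t) {0..1}"
    by (rule has_integral_mult_right[OF Lc_integral[OF t]])
  have "norm (integral {0..1} h) \<le> integral {0..1} (\<lambda>s. M / v (norm z) * (1 / (1 - t * s)))"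
    by (rule integral_norm_bound_integral[OF hi]) (use gi bnd in auto)
  also have "\<dots> = M / v (norm z) * Lc t" using gi by (rule integral_unique)
  finally have "norm (cesaro t f z) \<le> M / v (norm z) * Lc t"
    using cesaro_integral[OF fh t z] unfolding h_def by simp
  then show ?thesis unfolding M_def using vz by (simp add: pos_le_divide_eq)
qed

lemma cesaro_Hv:
  assumes w: "is_weight v" and f: "f \<in> Hv v" and t: "0 \<le> t" "t < 1"
  shows "cesaro t f \<in> Hv v"
proof -
  have fh: "f holomorphic_on ball 0 1" using f by (simp add: Hv_def)
  have "bdd_above ((\<lambda>z. norm (cesaro t f z) * v (norm z)) ` ball 0 1)"
    by (rule bdd_aboveI2[where M = "vnorm v f * Lc t"]) (rule cesaro_bound[OF w f t])
  then show ?thesis using cesaro_holo[OF fh t] by (simp add: Hv_def)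
qed

lemma cesaro_vnorm:
  assumes w: "is_weight v" and f: "f \<in> Hv v" and t: "0 \<le> t" "t < 1"
  shows "vnorm v (cesaro t f) \<le> vnorm v f * Lc t"
  by (rule vnorm_least) (rule cesaro_bound[OF w f t])

lemma Hv_diff:
  assumes w: "is_weight v" and f: "f \<in> Hv v" and g: "g \<in> Hv v"
  shows "(\<lambda>z. g z - f z) \<in> Hv v"
proof -
  have "bdd_above ((\<lambda>z. norm (g z - f z) * v (norm z)) ` ball 0 1)"
  proof (rule bdd_aboveI2[where M = "vnorm v g + vnorm v f"])
    fix z :: complex assume z: "z \<in> ball 0 1"
    have vz: "v (norm z) > 0" by (rule weight_pos[OF w]) (use z in auto)
    have "norm (g z - f z) * v (norm z) \<le> (norm (g z) + norm (f z)) * v (norm z)"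
      using vz by (simp add: mult_right_mono norm_triangle_ineq4)
    also have "\<dots> = norm (g z) * v (norm z) + norm (f z) * v (norm z)" by (simp add: algebra_simps)
    also have "\<dots> \<le> vnorm v g + vnorm v f"
      using vnorm_upper[OF g z] vnorm_upper[OF f z] by simp
    finally show "norm (g z - f z) * v (norm z) \<le> vnorm v g + vnorm v f" .
  qed
  then show ?thesis using f g by (auto simp: Hv_def intro!: holomorphic_intros)
qed

lemma integrand_integrable:
  assumes fh: "f holomorphic_on ball 0 1" and t: "0 \<le> t" "t < 1" and z: "z \<in> ball 0 1"
  shows "(\<lambda>s. f (s *\<^sub>R z) / (1 - complex_of_real t * (s *\<^sub>R z))) integrable_on {0..1}"
proof -
  have nz: "norm z < 1" using z by simp
  have inball: "s *\<^sub>R z \<in> ball 0 1" if "s \<in> {0..1}" for s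
  proof -
    have "norm (s *\<^sub>R z) = s * norm z" using that by simp
    also have "\<dots> \<le> norm z" using that by (simp add: mult_left_le_one_le)
    finally show ?thesis using nz by simp
  qed
  have c1: "continuous_on {0..1} (\<lambda>s::real. s *\<^sub>R z)" by (intro continuous_intros)
  have c2: "continuous_on {0..1} (\<lambda>s::real. f (s *\<^sub>R z))"
    by (rule continuous_on_compose2[OF holomorphic_on_imp_continuous_on[OF fh] c1]) (use inball in auto)
  have dnz: "\<And>s. s \<in> {0..1} \<Longrightarrow> 1 - complex_of_real t * (s *\<^sub>R z) \<noteq> 0"
    using denom_nz[OF t inball] by blast
  have hc: "continuous_on {0..1} (\<lambda>s. f (s *\<^sub>R z) / (1 - complex_of_real t * (s *\<^sub>R z)))"
    by (intro continuous_intros c2) (use dnz in blast)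
  then show ?thesis by (rule integrable_continuous_interval)
qed

lemma cesaro_diff:
  assumes w: "is_weight v" and f: "f \<in> Hv v" and g: "g \<in> Hv v" and t: "0 \<le> t" "t < 1"
    and z: "z \<in> ball 0 1"
  shows "cesaro t g z - cesaro t f z = cesaro t (\<lambda>z. g z - f z) z"
proof -
  have fh: "f holomorphic_on ball 0 1" using f by (simp add: Hv_def)
  have gh: "g holomorphic_on ball 0 1" using g by (simp add: Hv_def)
  have dh: "(\<lambda>z. g z - f z) holomorphic_on ball 0 1" using Hv_diff[OF w f g] by (simp add: Hv_def)
  have "cesaro t (\<lambda>z. g z - f z) z =
     integral {0..1} (\<lambda>s. g (s *\<^sub>R z) / (1 - complex_of_real t * (s *\<^sub>R z)) - f (s *\<^sub>R z) / (1 - complex_of_real t * (s *\<^sub>R z)))"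
    unfolding cesaro_integral[OF dh t z] by (simp add: diff_divide_distrib)
  also have "\<dots> = cesaro t g z - cesaro t f z"
    unfolding cesaro_integral[OF fh t z] cesaro_integral[OF gh t z]
    by (rule integral_diff[OF integrand_integrable[OF gh t z] integrand_integrable[OF fh t z]])
  finally show ?thesis by simp
qed

lemma opnorm_upper:
  assumes w: "is_weight v" and t: "0 \<le> t" "t < 1"
  shows "opnorm_v v (cesaro t) \<le> Lc t"
  unfolding opnorm_v_def
proof (rule cSup_least)
  have z0: "(\<lambda>z. 0) \<in> Hv v" unfolding Hv_def by (auto intro: bdd_aboveI2[where M=0])
  have "vnorm v (\<lambda>z. 0) \<le> 1" by (rule vnorm_least) simp
  then show "{vnorm v (cesaro t f) |f. f \<in> Hv v \<and> vnorm v f \<le> 1} \<noteq> {}" using z0 by blast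
next
  fix x assume "x \<in> {vnorm v (cesaro t f) |f. f \<in> Hv v \<and> vnorm v f \<le> 1}"
  then obtain f where f: "f \<in> Hv v" "vnorm v f \<le> 1" and x: "x = vnorm v (cesaro t f)" by blast
  have "x \<le> vnorm v f * Lc t" using x cesaro_vnorm[OF w f(1) t] by simp
  also have "\<dots> \<le> 1 * Lc t" by (rule mult_right_mono[OF f(2)]) (use Lc_pos[OF t] in simp)
  finally show "x \<le> Lc t" by simp
qed

lemma opnorm_lower:
  assumes w: "is_weight v" and t: "0 \<le> t" "t < 1"
  shows "1 \<le> opnorm_v v (cesaro t)"
proof -
  have v0: "v 0 > 0" by (rule weight_pos[OF w]) auto
  define f0 where "f0 = (\<lambda>z::complex. complex_of_real (1 / v 0))"
  have le: "norm (f0 z) * v (norm z) \<le> 1" if z: "z \<in> ball 0 1" for z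
  proof -
    have "v (norm z) \<le> v 0" by (rule weight_mono[OF w]) (use z in auto)
    moreover have "norm (f0 z) = 1 / v 0" using v0 by (simp add: f0_def norm_divide)
    ultimately show ?thesis using v0 by (simp add: divide_le_eq_1)
  qed
  have f0H: "f0 \<in> Hv v"
    unfolding Hv_def using le by (auto simp: f0_def intro!: bdd_aboveI2[where M=1])
  have f0n: "vnorm v f0 \<le> 1" by (rule vnorm_least) (rule le)
  have CH: "cesaro t f0 \<in> Hv v" by (rule cesaro_Hv[OF w f0H t])
  have "norm (cesaro t f0 0) * v (norm (0::complex)) \<le> vnorm v (cesaro t f0)"
    by (rule vnorm_upper[OF CH]) simp
  moreover have "norm (cesaro t f0 0) * v (norm (0::complex)) = 1"
    using v0 by (simp add: cesaro_def f0_def norm_divide)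
  ultimately have 1: "1 \<le> vnorm v (cesaro t f0)" by simp
  have "vnorm v (cesaro t f0) \<le> opnorm_v v (cesaro t)"
    unfolding opnorm_v_def
  proof (rule cSup_upper)
    show "vnorm v (cesaro t f0) \<in> {vnorm v (cesaro t f) |f. f \<in> Hv v \<and> vnorm v f \<le> 1}"
      using f0H f0n by blast
    show "bdd_above {vnorm v (cesaro t f) |f. f \<in> Hv v \<and> vnorm v f \<le> 1}"
    proof (rule bdd_aboveI)
      fix x assume "x \<in> {vnorm v (cesaro t f) |f. f \<in> Hv v \<and> vnorm v f \<le> 1}"
      then obtain f where f: "f \<in> Hv v" "vnorm v f \<le> 1" and x: "x = vnorm v (cesaro t f)" by blast
      have "x \<le> vnorm v f * Lc t" using x cesaro_vnorm[OF w f(1) t] by simp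
      also have "\<dots> \<le> 1 * Lc t" by (rule mult_right_mono[OF f(2)]) (use Lc_pos[OF t] in simp)
      finally show "x \<le> Lc t" by simp
    qed
  qed
  with 1 show ?thesis by simp
qed

theorem proposition2p4:
  fixes v :: "real \<Rightarrow> real"
  assumes "is_weight v"
  shows "(\<forall>t\<in>{0..<1}.
            (\<forall>f\<in>Hv v. cesaro t f \<in> Hv v) \<and>
            (\<forall>f\<in>Hv v. \<forall>e>0. \<exists>d>0. \<forall>g\<in>Hv v.
                vnorm v (\<lambda>z. g z - f z) < d \<longrightarrow>
                vnorm v (\<lambda>z. cesaro t g z - cesaro t f z) < e))
       \<and> opnorm_v v (cesaro 0) = 1
       \<and> (\<forall>t\<in>{0<..<1}. 1 \<le> opnorm_v v (cesaro t) \<and>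
                          opnorm_v v (cesaro t) \<le> - ln (1 - t) / t)"
proof (intro conjI ballI allI impI)
  fix t :: real assume "t \<in> {0..<1}"
  then have t: "0 \<le> t" "t < 1" by auto
  {
    fix f assume f: "f \<in> Hv v"
    show "cesaro t f \<in> Hv v" by (rule cesaro_Hv[OF assms f t])
  }
  fix f :: "complex \<Rightarrow> complex" and e :: real assume f: "f \<in> Hv v" and e: "e > 0"
  have L: "Lc t > 0" by (rule Lc_pos[OF t])
  show "\<exists>d>0. \<forall>g\<in>Hv v. vnorm v (\<lambda>z. g z - f z) < d \<longrightarrow>
                vnorm v (\<lambda>z. cesaro t g z - cesaro t f z) < e"
  proof (intro exI conjI ballI impI)
    show "e / Lc t > 0" using e L by simp
    fix g assume g: "g \<in> Hv v" and lt: "vnorm v (\<lambda>z. g z - f z) < e / Lc t"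
    have "vnorm v (\<lambda>z. cesaro t g z - cesaro t f z) \<le> vnorm v (\<lambda>z. g z - f z) * Lc t"
    proof (rule vnorm_least)
      fix z :: complex assume z: "z \<in> ball 0 1"
      show "norm (cesaro t g z - cesaro t f z) * v (norm z) \<le> vnorm v (\<lambda>z. g z - f z) * Lc t"
        unfolding cesaro_diff[OF assms f g t z]
        by (rule cesaro_bound[OF assms Hv_diff[OF assms f g] t z])
    qed
    also have "\<dots> < e / Lc t * Lc t" by (rule mult_strict_right_mono[OF lt L])
    also have "\<dots> = e" using L by simp
    finally show "vnorm v (\<lambda>z. cesaro t g z - cesaro t f z) < e" .
  qed
next
  show "opnorm_v v (cesaro 0) = 1"
    using opnorm_upper[OF assms, of 0] opnorm_lower[OF assms, of 0] by (simp add: Lc_def)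
next
  fix t :: real assume "t \<in> {0<..<1}"
  then have t: "0 \<le> t" "t < 1" "t \<noteq> 0" by auto
  show "1 \<le> opnorm_v v (cesaro t)" by (rule opnorm_lower[OF assms t(1,2)])
  show "opnorm_v v (cesaro t) \<le> - ln (1 - t) / t"
    using opnorm_upper[OF assms t(1,2)] t(3) by (simp add: Lc_def)
qed

end
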